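(* Let $\Omega\subseteq\mathbb{R}^N$ be open and bounded, and let $\rho$, $\Delta$, $\Theta=\partial\Omega\cup\Delta$, $\eta$, $T$ and $T_n$ be as described in the context. If $f\in C(\overline{\Omega})$, then $Tf$ extends to a function in $C(\overline{\Omega})$ which coincides with $f$ on $\partial\Omega\cup\Delta$, and $T_nf\to f$ uniformly as $n\to\infty$. Further, if $f\in C(\Omega)$ and $\Gamma\subseteq\partial\Omega$ is a closed set such that $\mathrm{supp}(f)\cap\Gamma=\emptyset$, then also $\mathrm{supp}(Tf)\cap\Gamma=\emptyset$.
   Context: $\rho\in C_c^\infty(\mathbb{R}^N)$ satisfies $0\le\rho\le1$, $\rho(x)=0$ iff $|x|\ge1$, $\rho$ is radially symmetric, and $\rho(x)\ge\rho(1/2)$ for all $|x|<1/2$ (where $\rho(1/2)$ denotes the common value of $\rho$ on the sphere $|x|=1/2$). Set $M_\rho:=(\int_{B_1(0)}\rho(y)\,dy)^{-1}$. Let $\Delta\subseteq\overline{\Omega}$ (possibly empty) be such that $\Theta:=\partial\Omega\cup\Delta$ is closed, and let $\eta\in C^\infty(\mathbb{R}^N)$ be non-negative with $\eta^{-1}(\{0\})=\Theta$, all derivatives of $\eta$ vanishing on $\Theta$, and $\eta(x)<\mathrm{dist}(x,\Theta)$ for every $x\in\mathbb{R}^N\setminus\Theta$. For $f\in L^1_{loc}(\Omega)$, $x\in\Omega$ and $n\in\mathbb{N}$ define $Tf(x):=M_\rho\int_{B_1(0)}\rho(z)f(x-\eta(x)z)\,dz$ and $T_nf(x):=M_\rho\int_{B_1(0)}\rho(z)f(x-\tfrac{\eta(x)}{n}z)\,dz$.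 Thus $Tf(x)=f(x)$ if $\eta(x)=0$, and $Tf(x)=\frac{M_\rho}{\eta(x)^N}\int_\Omega\rho\big(\frac{x-y}{\eta(x)}\big)f(y)\,dy$ if $\eta(x)>0$. For $f:\Omega\to\mathbb{R}$, $\mathrm{supp}(f)$ denotes the closure of $\{x\in\Omega:f(x)\neq0\}$. *)

theory Defs
  imports "HOL-Analysis.Analysis"
begin

fun pderivs :: "'a::euclidean_space list \<Rightarrow> ('a \<Rightarrow> real) \<Rightarrow> 'a \<Rightarrow> real" where
  "pderivs [] f = f"
| "pderivs (i # is) f = (\<lambda>x. frechet_derivative (pderivs is f) (at x) i)"

definition smooth_fun :: "('a::euclidean_space \<Rightarrow> real) \<Rightarrow> bool" where
  "smooth_fun f \<longleftrightarrow> (\<forall>is \<in> lists Basis. \<forall>x. pderivs is f differentiable at x)"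

definition M_rho :: "('a::euclidean_space \<Rightarrow> real) \<Rightarrow> real" where
  "M_rho \<rho> = inverse (integral (ball 0 1) \<rho>)"

definition Tsc :: "('a::euclidean_space \<Rightarrow> real) \<Rightarrow> ('a \<Rightarrow> real) \<Rightarrow> real \<Rightarrow> ('a \<Rightarrow> real) \<Rightarrow> 'a \<Rightarrow> real" where
  "Tsc \<rho> \<eta> s f x = M_rho \<rho> * integral (ball 0 1) (\<lambda>z. \<rho> z * f (x - (s * \<eta> x) *\<^sub>R z))"

definition Top :: "('a::euclidean_space \<Rightarrow> real) \<Rightarrow> ('a \<Rightarrow> real) \<Rightarrow> ('a \<Rightarrow> real) \<Rightarrow> 'a \<Rightarrow> real" where
  "Top \<rho> \<eta> f = Tsc \<rho> \<eta> 1 f"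

definition Tn :: "('a::euclidean_space \<Rightarrow> real) \<Rightarrow> ('a \<Rightarrow> real) \<Rightarrow> nat \<Rightarrow> ('a \<Rightarrow> real) \<Rightarrow> 'a \<Rightarrow> real" where
  "Tn \<rho> \<eta> n f = Tsc \<rho> \<eta> (1 / real n) f"

definition supp_on :: "'a::euclidean_space set \<Rightarrow> ('a \<Rightarrow> real) \<Rightarrow> 'a set" where
  "supp_on \<Omega> f = closure {x \<in> \<Omega>. f x \<noteq> 0}"

end

theory Submission
  imports Defs
begin


lemma ballpos: "r > 0 \<Longrightarrow> integral (ball (0::'a::euclidean_space) r) (\<lambda>x. 1::real) > 0"
  using lmeasure_integral[OF lmeasurable_ball, of "0::'a" r] content_ball_pos[of r "0::'a"] by simp

lemma integrable_ball_of_cont: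
  fixes h :: "'a::euclidean_space \<Rightarrow> real"
  assumes "continuous_on (cball a r) h"
  shows "h integrable_on ball a r"
proof -
  have "compact (h ` cball a r)" by (intro compact_continuous_image assms) simp
  then obtain B where B: "\<forall>y\<in>h ` cball a r. norm y \<le> B"
    using compact_imp_bounded bounded_iff by metis
  have "h absolutely_integrable_on ball a r"
  proof (rule measurable_bounded_by_integrable_imp_absolutely_integrable[where g="\<lambda>_. B"])
    show "h \<in> borel_measurable (lebesgue_on (ball a r))"
      by (rule continuous_imp_measurable_on_sets_lebesgue)
        (use continuous_on_subset[OF assms ball_subset_cball] in auto)
    show "ball a r \<in> sets lebesgue" by simp
    show "(\<lambda>_. B) integrable_on ball a r" by (rule integrable_on_const) simp
    show "norm (h x) \<le> B" if "x \<in> ball a r" for x using B that by auto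
  qed
  then show ?thesis using absolutely_integrable_on_def by blast
qed

lemma Mrho_bound:
  fixes \<rho> F G :: "'a::euclidean_space \<Rightarrow> real"
  assumes pos: "integral (ball 0 1) \<rho> > 0" and nn: "\<And>z. \<rho> z \<ge> 0"
    and ir: "\<rho> integrable_on ball 0 1"
    and iF: "(\<lambda>z. \<rho> z * F z) integrable_on ball 0 1"
    and iG: "(\<lambda>z. \<rho> z * G z) integrable_on ball 0 1"
    and le: "\<And>z. z \<in> ball 0 1 \<Longrightarrow> \<bar>F z - G z\<bar> \<le> e"
  shows "\<bar>M_rho \<rho> * integral (ball 0 1) (\<lambda>z. \<rho> z * F z) - M_rho \<rho> * integral (ball 0 1) (\<lambda>z. \<rho> z * G z)\<bar> \<le> e"
proof -
  let ?I = "integral (ball 0 1) \<rho>"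
  have eq: "(\<lambda>z. \<rho> z * (F z - G z)) = (\<lambda>z. \<rho> z * F z - \<rho> z * G z)"
    by (simp add: algebra_simps)
  have d: "integral (ball 0 1) (\<lambda>z. \<rho> z * F z) - integral (ball 0 1) (\<lambda>z. \<rho> z * G z)
      = integral (ball 0 1) (\<lambda>z. \<rho> z * (F z - G z))"
    unfolding eq using integral_diff[OF iF iG] by simp
  have "norm (integral (ball 0 1) (\<lambda>z. \<rho> z * (F z - G z))) \<le> integral (ball 0 1) (\<lambda>z. e * \<rho> z)"
  proof (rule integral_norm_bound_integral)
    show "(\<lambda>z. \<rho> z * (F z - G z)) integrable_on ball 0 1"
      unfolding eq by (rule integrable_diff[OF iF iG])
    show "(\<lambda>z. e * \<rho> z) integrable_on ball 0 1"
      using integrable_on_cmult_left[OF ir, of e] by simp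
    show "norm (\<rho> z * (F z - G z)) \<le> e * \<rho> z" if "z \<in> ball 0 1" for z
    proof -
      have "norm (\<rho> z * (F z - G z)) = \<rho> z * \<bar>F z - G z\<bar>" using nn[of z] by (simp add: abs_mult)
      also have "\<dots> \<le> \<rho> z * e" by (rule mult_left_mono[OF le[OF that] nn])
      finally show ?thesis by (simp add: mult.commute)
    qed
  qed
  also have "\<dots> = e * ?I" by (simp add: integral_mult_right)
  finally have n: "\<bar>integral (ball 0 1) (\<lambda>z. \<rho> z * (F z - G z))\<bar> \<le> e * ?I" by simp
  have "\<bar>M_rho \<rho> * integral (ball 0 1) (\<lambda>z. \<rho> z * F z) - M_rho \<rho> * integral (ball 0 1) (\<lambda>z. \<rho> z * G z)\<bar>
      = inverse ?I * \<bar>integral (ball 0 1) (\<lambda>z. \<rho> z * (F z - G z))\<bar>"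
    using pos by (simp add: M_rho_def d[symmetric] right_diff_distrib[symmetric] abs_mult)
  also have "\<dots> \<le> inverse ?I * (e * ?I)"
    using n pos by (intro mult_left_mono) auto
  also have "\<dots> = e" using pos by simp
  finally show ?thesis .
qed


theorem proposition2p3:
  fixes \<Omega> \<Delta> :: "'a::euclidean_space set"
    and \<rho> \<eta> :: "'a \<Rightarrow> real"
  assumes \<Omega>_open: "open \<Omega>" and \<Omega>_bdd: "bounded \<Omega>"
    and \<rho>_smooth: "smooth_fun \<rho>"
    and \<rho>_range: "\<And>x. 0 \<le> \<rho> x \<and> \<rho> x \<le> 1"
    and \<rho>_zero: "\<And>x. \<rho> x = 0 \<longleftrightarrow> norm x \<ge> 1"
    and \<rho>_radial: "\<And>x y. norm x = norm y \<Longrightarrow> \<rho> x = \<rho> y"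
    and \<rho>_half: "\<And>x y. norm x < 1/2 \<Longrightarrow> norm y = 1/2 \<Longrightarrow> \<rho> x \<ge> \<rho> y"
    and \<Delta>_sub: "\<Delta> \<subseteq> closure \<Omega>"
    and \<Theta>_closed: "closed (frontier \<Omega> \<union> \<Delta>)"
    and \<eta>_smooth: "smooth_fun \<eta>"
    and \<eta>_nonneg: "\<And>x. \<eta> x \<ge> 0"
    and \<eta>_zeros: "{x. \<eta> x = 0} = frontier \<Omega> \<union> \<Delta>"
    and \<eta>_flat: "\<And>is x. is \<in> lists Basis \<Longrightarrow> x \<in> frontier \<Omega> \<union> \<Delta> \<Longrightarrow> pderivs is \<eta> x = 0"
    and \<eta>_dist: "\<And>x. x \<notin> frontier \<Omega> \<union> \<Delta> \<Longrightarrow> \<eta> x < infdist x (frontier \<Omega> \<union> \<Delta>)"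
  shows
    "(\<forall>f. continuous_on (closure \<Omega>) f \<longrightarrow>
        (\<exists>g. continuous_on (closure \<Omega>) g \<and> (\<forall>x\<in>\<Omega>. g x = Top \<rho> \<eta> f x)
             \<and> (\<forall>x\<in>frontier \<Omega> \<union> \<Delta>. g x = f x))
        \<and> uniform_limit \<Omega> (\<lambda>n. Tn \<rho> \<eta> n f) f sequentially)
     \<and> (\<forall>f \<Gamma>. continuous_on \<Omega> f \<longrightarrow> closed \<Gamma> \<longrightarrow> \<Gamma> \<subseteq> frontier \<Omega> \<longrightarrow>
          supp_on \<Omega> f \<inter> \<Gamma> = {} \<longrightarrow> supp_on \<Omega> (Top \<rho> \<eta> f) \<inter> \<Gamma> = {})"
proof -
  define \<Theta> where "\<Theta> = frontier \<Omega> \<union> \<Delta>"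
  have nil: "[] \<in> lists Basis" by simp
  have \<rho>_cont: "continuous_on UNIV \<rho>"
  proof (intro continuous_at_imp_continuous_on ballI differentiable_imp_continuous_within)
    fix x show "\<rho> differentiable at x"
      using \<rho>_smooth nil unfolding smooth_fun_def by (metis pderivs.simps(1))
  qed
  have \<eta>_cont: "continuous_on UNIV \<eta>"
  proof (intro continuous_at_imp_continuous_on ballI differentiable_imp_continuous_within)
    fix x show "\<eta> differentiable at x"
      using \<eta>_smooth nil unfolding smooth_fun_def by (metis pderivs.simps(1))
  qed
  have \<eta>0: "\<eta> x = 0" if "x \<in> \<Theta>" for x
    using \<eta>_zeros that unfolding \<Theta>_def by blast
  have \<eta>_le: "\<eta> x \<le> dist x p" if "p \<in> \<Theta>" for x p
  proof (cases "x \<in> \<Theta>")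
    case True then show ?thesis using \<eta>0 by simp
  next
    case False
    then have "\<eta> x < infdist x \<Theta>" using \<eta>_dist unfolding \<Theta>_def by blast
    also have "\<dots> \<le> dist x p" by (rule infdist_le[OF that])
    finally show ?thesis by simp
  qed
  have stay: "x - (s * \<eta> x) *\<^sub>R z \<in> \<Omega>"
    if x: "x \<in> \<Omega>" and s: "0 \<le> s" "s \<le> 1" and z: "norm z \<le> 1" for x s z
  proof (cases "\<eta> x = 0")
    case True then show ?thesis using x by simp
  next
    case False
    then have xT: "x \<notin> \<Theta>" using \<eta>0 by blast
    then have lt: "\<eta> x < infdist x \<Theta>" using \<eta>_dist unfolding \<Theta>_def by blast
    define y where "y = x - (s * \<eta> x) *\<^sub>R z"
    have dxy: "dist x y \<le> \<eta> x"
    proof -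
      have "dist x y = s * \<eta> x * norm z" using s \<eta>_nonneg[of x] by (simp add: y_def dist_norm)
      also have "\<dots> \<le> 1 * \<eta> x * 1"
        using s z \<eta>_nonneg[of x] by (intro mult_mono) auto
      finally show ?thesis by simp
    qed
    show ?thesis
    proof (rule ccontr)
      assume "\<not> ?thesis"
      then have yn: "y \<notin> \<Omega>" by (simp add: y_def)
      have "closed_segment x y \<inter> frontier \<Omega> \<noteq> {}"
        by (rule connected_Int_frontier) (use x yn in auto)
      then obtain p where p: "p \<in> closed_segment x y" "p \<in> frontier \<Omega>" by blast
      have "dist x p \<le> dist x y" using dist_in_closed_segment[OF p(1)] by (simp add: dist_commute)
      moreover have "infdist x \<Theta> \<le> dist x p" using p(2) unfolding \<Theta>_def by (intro infdist_le) auto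
      ultimately show False using lt dxy by linarith
    qed
  qed
  have stay_cl: "x - (s * \<eta> x) *\<^sub>R z \<in> closure \<Omega>"
    if x: "x \<in> closure \<Omega>" and s: "0 \<le> s" "s \<le> 1" and z: "norm z \<le> 1" for x s z
  proof (cases "x \<in> \<Omega>")
    case True then show ?thesis using stay[OF True s z] closure_subset by blast
  next
    case False
    then have "x \<in> frontier \<Omega>" using x \<Omega>_open by (simp add: frontier_def interior_open)
    then have "\<eta> x = 0" using \<eta>0 unfolding \<Theta>_def by blast
    then show ?thesis using x by simp
  qed
  have \<rho>nn: "\<And>z. \<rho> z \<ge> 0" using \<rho>_range by blast
  have \<rho>int: "\<rho> integrable_on ball 0 r" for r
    by (rule integrable_ball_of_cont) (rule continuous_on_subset[OF \<rho>_cont], simp)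
  have Ipos: "integral (ball 0 1) \<rho> > 0"
  proof -
    obtain b :: 'a where b: "b \<in> Basis" using nonempty_Basis by blast
    define y0 where "y0 = (1/2::real) *\<^sub>R b"
    have ny0: "norm y0 = 1/2" using b by (simp add: y0_def)
    define c where "c = \<rho> y0"
    have cpos: "c > 0" using \<rho>_zero[of y0] \<rho>nn[of y0] ny0 unfolding c_def by auto
    have "0 < c * integral (ball (0::'a) (1/2)) (\<lambda>x. 1::real)"
      by (rule mult_pos_pos[OF cpos ballpos]) simp
    also have "\<dots> = integral (ball (0::'a) (1/2)) (\<lambda>x. c)"
      by (simp add: integral_mult_right[symmetric])
    also have "\<dots> \<le> integral (ball 0 (1/2)) \<rho>"
    proof (rule integral_le)
      show "(\<lambda>x. c) integrable_on ball (0::'a) (1/2)" by (rule integrable_on_const) simp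
      show "\<rho> integrable_on ball 0 (1/2)" by (rule \<rho>int)
      show "c \<le> \<rho> x" if "x \<in> ball 0 (1/2)" for x
        using \<rho>_half[of x y0] that ny0 unfolding c_def by simp
    qed
    also have "\<dots> \<le> integral (ball 0 1) \<rho>"
      by (rule integral_subset_le) (auto simp: \<rho>int \<rho>nn)
    finally show ?thesis .
  qed
  have Tsc0: "Tsc \<rho> \<eta> 0 f x = f x" for f x
    using Ipos by (simp add: Tsc_def M_rho_def integral_mult_left)
  have Tsc_eta0: "Tsc \<rho> \<eta> s f x = f x" if "\<eta> x = 0" for s f x
    using Tsc0[of f x] that by (simp add: Tsc_def)
  have integ: "(\<lambda>z. \<rho> z * f (x - (s * \<eta> x) *\<^sub>R z)) integrable_on ball 0 1"
    if f: "continuous_on (closure \<Omega>) f" and x: "x \<in> closure \<Omega>" and s: "0 \<le> s" "s \<le> 1" for f x s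
  proof (rule integrable_ball_of_cont)
    have "continuous_on (cball 0 1) (\<lambda>z. f (x - (s * \<eta> x) *\<^sub>R z))"
      by (rule continuous_on_compose2[OF f]) (auto intro!: continuous_intros stay_cl[OF x s])
    then show "continuous_on (cball 0 1) (\<lambda>z. \<rho> z * f (x - (s * \<eta> x) *\<^sub>R z))"
      by (intro continuous_intros continuous_on_subset[OF \<rho>_cont]) auto
  qed
  have bound: "\<bar>Tsc \<rho> \<eta> s f x - Tsc \<rho> \<eta> s' f x'\<bar> \<le> e"
    if f: "continuous_on (closure \<Omega>) f" and x: "x \<in> closure \<Omega>" "x' \<in> closure \<Omega>"
      and s: "0 \<le> s" "s \<le> 1" "0 \<le> s'" "s' \<le> 1"
      and le: "\<And>z. z \<in> ball 0 1 \<Longrightarrow> \<bar>f (x - (s * \<eta> x) *\<^sub>R z) - f (x' - (s' * \<eta> x') *\<^sub>R z)\<bar> \<le> e"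
    for f x x' s s' e
    unfolding Tsc_def
    by (rule Mrho_bound[OF Ipos \<rho>nn \<rho>int integ[OF f x(1) s(1,2)] integ[OF f x(2) s(3,4)] le])
  have part1: "(\<exists>g. continuous_on (closure \<Omega>) g \<and> (\<forall>x\<in>\<Omega>. g x = Top \<rho> \<eta> f x)
             \<and> (\<forall>x\<in>frontier \<Omega> \<union> \<Delta>. g x = f x))
        \<and> uniform_limit \<Omega> (\<lambda>n. Tn \<rho> \<eta> n f) f sequentially"
    if f: "continuous_on (closure \<Omega>) f" for f
  proof -
    have cpt: "compact (closure \<Omega>)" using \<Omega>_bdd by (simp add: compact_closure)
    have uc: "uniformly_continuous_on (closure \<Omega>) f" by (rule compact_uniformly_continuous[OF f cpt])
    have Tcont: "continuous_on (closure \<Omega>) (Top \<rho> \<eta> f)"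
      unfolding continuous_on_iff
    proof (intro ballI allI impI)
      fix x0 and e :: real assume x0: "x0 \<in> closure \<Omega>" and e: "e > 0"
      obtain d1 where d1: "d1 > 0" "\<And>a b. a \<in> closure \<Omega> \<Longrightarrow> b \<in> closure \<Omega> \<Longrightarrow> dist a b < d1 \<Longrightarrow> dist (f a) (f b) < e/2"
        using uc e unfolding uniformly_continuous_on_def by (metis half_gt_zero)
      have "isCont \<eta> x0" using \<eta>_cont by (simp add: continuous_on_eq_continuous_at)
      then obtain d2 where d2: "d2 > 0" "\<And>x. dist x x0 < d2 \<Longrightarrow> dist (\<eta> x) (\<eta> x0) < d1/2"
        using d1(1) unfolding continuous_at_eps_delta by (metis half_gt_zero)
      show "\<exists>d>0. \<forall>x'\<in>closure \<Omega>. dist x' x0 < d \<longrightarrow> dist (Top \<rho> \<eta> f x') (Top \<rho> \<eta> f x0) < e"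
      proof (intro exI[of _ "min d2 (d1/2)"] conjI ballI impI)
        show "min d2 (d1/2) > 0" using d1 d2 by simp
        fix x assume x: "x \<in> closure \<Omega>" and dx: "dist x x0 < min d2 (d1/2)"
        have "\<bar>Tsc \<rho> \<eta> 1 f x - Tsc \<rho> \<eta> 1 f x0\<bar> \<le> e/2"
        proof (rule bound[OF f x x0])
          fix z :: 'a assume z: "z \<in> ball 0 1"
          have nz: "norm z \<le> 1" using z by simp
          have "dist (x - (1 * \<eta> x) *\<^sub>R z) (x0 - (1 * \<eta> x0) *\<^sub>R z)
                = norm ((x - x0) - (\<eta> x - \<eta> x0) *\<^sub>R z)"
            by (simp add: dist_norm algebra_simps)
          also have "\<dots> \<le> norm (x - x0) + norm ((\<eta> x - \<eta> x0) *\<^sub>R z)" by (rule norm_triangle_ineq4)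
          also have "norm ((\<eta> x - \<eta> x0) *\<^sub>R z) \<le> \<bar>\<eta> x - \<eta> x0\<bar> * 1"
            using nz mult_left_mono[OF nz, of "\<bar>\<eta> x - \<eta> x0\<bar>"] by simp
          also have "\<bar>\<eta> x - \<eta> x0\<bar> < d1/2" using d2(2)[of x] dx by (simp add: dist_real_def)
          finally have "dist (x - (1 * \<eta> x) *\<^sub>R z) (x0 - (1 * \<eta> x0) *\<^sub>R z) < d1"
            using dx by (simp add: dist_norm)
          then have "dist (f (x - (1 * \<eta> x) *\<^sub>R z)) (f (x0 - (1 * \<eta> x0) *\<^sub>R z)) < e/2"
            by (intro d1(2) stay_cl x x0 nz) auto
          then show "\<bar>f (x - (1 * \<eta> x) *\<^sub>R z) - f (x0 - (1 * \<eta> x0) *\<^sub>R z)\<bar> \<le> e/2"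
            by (simp add: dist_real_def)
        qed auto
        then show "dist (Top \<rho> \<eta> f x) (Top \<rho> \<eta> f x0) < e"
          using e by (simp add: Top_def dist_real_def)
      qed
    qed
    have unif: "uniform_limit \<Omega> (\<lambda>n. Tn \<rho> \<eta> n f) f sequentially"
      unfolding uniform_limit_iff
    proof (intro allI impI)
      fix e :: real assume e: "e > 0"
      obtain d1 where d1: "d1 > 0" "\<And>a b. a \<in> closure \<Omega> \<Longrightarrow> b \<in> closure \<Omega> \<Longrightarrow> dist a b < d1 \<Longrightarrow> dist (f a) (f b) < e/2"
        using uc e unfolding uniformly_continuous_on_def by (metis half_gt_zero)
      have "compact (\<eta> ` closure \<Omega>)"
        by (rule compact_continuous_image[OF continuous_on_subset[OF \<eta>_cont] cpt]) simp
      then obtain B where B: "B > 0" "\<And>x. x \<in> closure \<Omega> \<Longrightarrow> \<eta> x \<le> B"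
        using compact_imp_bounded[of "\<eta> ` closure \<Omega>"] unfolding bounded_pos
        by (metis image_eqI abs_le_D1 real_norm_def)
      obtain N :: nat where N: "B / d1 < real N" using reals_Archimedean2 by blast
      have Npos: "real N > 0" using N B d1 by (smt (verit) divide_pos_pos)
      show "\<forall>\<^sub>F n in sequentially. \<forall>x\<in>\<Omega>. dist (Tn \<rho> \<eta> n f x) (f x) < e"
        unfolding eventually_sequentially
      proof (intro exI[of _ N] allI impI ballI)
        fix n x assume n: "N \<le> n" and x: "x \<in> \<Omega>"
        have xc: "x \<in> closure \<Omega>" using x closure_subset by blast
        have npos: "real n > 0" using n Npos by simp
        have s: "0 \<le> 1 / real n" "1 / real n \<le> 1" using npos by auto
        have Bn: "B / real n < d1"
        proof -
          have "B < d1 * real N" using N d1(1) by (simp add: field_simps)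
          also have "\<dots> \<le> d1 * real n" using n d1(1) by simp
          finally show ?thesis using npos by (simp add: field_simps)
        qed
        have "\<bar>Tsc \<rho> \<eta> (1 / real n) f x - Tsc \<rho> \<eta> 0 f x\<bar> \<le> e/2"
        proof (rule bound[OF f xc xc s])
          fix z :: 'a assume z: "z \<in> ball 0 1"
          have nz: "norm z \<le> 1" using z by simp
          have "dist (x - (1 / real n * \<eta> x) *\<^sub>R z) (x - (0 * \<eta> x) *\<^sub>R z) = (\<eta> x / real n) * norm z"
            using \<eta>_nonneg[of x] npos by (simp add: dist_norm)
          also have "\<dots> \<le> (\<eta> x / real n) * 1"
            using nz \<eta>_nonneg[of x] npos by (intro mult_left_mono) auto
          also have "\<dots> \<le> B / real n" using B(2)[OF xc] npos by (simp add: divide_right_mono)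
          finally have "dist (x - (1 / real n * \<eta> x) *\<^sub>R z) (x - (0 * \<eta> x) *\<^sub>R z) < d1" using Bn by simp
          then have "dist (f (x - (1 / real n * \<eta> x) *\<^sub>R z)) (f (x - (0 * \<eta> x) *\<^sub>R z)) < e/2"
            by (intro d1(2) stay_cl xc nz s) auto
          then show "\<bar>f (x - (1 / real n * \<eta> x) *\<^sub>R z) - f (x - (0 * \<eta> x) *\<^sub>R z)\<bar> \<le> e/2"
            by (simp add: dist_real_def)
        qed auto
        then show "dist (Tn \<rho> \<eta> n f x) (f x) < e"
          using e Tsc0[of f x] by (simp add: Tn_def dist_real_def)
      qed
    qed
    have bd: "Top \<rho> \<eta> f x = f x" if "x \<in> frontier \<Omega> \<union> \<Delta>" for x
      using Tsc_eta0 \<eta>0 that unfolding Top_def \<Theta>_def by blast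
    show ?thesis using Tcont unif bd by blast
  qed
  have part2: "supp_on \<Omega> (Top \<rho> \<eta> f) \<inter> \<Gamma> = {}"
    if f: "continuous_on \<Omega> f" and \<Gamma>: "closed \<Gamma>" "\<Gamma> \<subseteq> frontier \<Omega>"
      and supp: "supp_on \<Omega> f \<inter> \<Gamma> = {}" for f \<Gamma>
  proof -
    have "p \<notin> supp_on \<Omega> (Top \<rho> \<eta> f)" if p: "p \<in> \<Gamma>" for p
    proof
      assume pin: "p \<in> supp_on \<Omega> (Top \<rho> \<eta> f)"
      have "p \<notin> closure {x \<in> \<Omega>. f x \<noteq> 0}" using supp p unfolding supp_on_def by blast
      then obtain r where r: "r > 0" "\<And>y. y \<in> \<Omega> \<Longrightarrow> f y \<noteq> 0 \<Longrightarrow> \<not> dist y p < r"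
        unfolding closure_approachable by auto
      have "\<exists>y\<in>{x \<in> \<Omega>. Top \<rho> \<eta> f x \<noteq> 0}. dist y p < r/2"
        using pin r(1) unfolding supp_on_def closure_approachable
        by (meson half_gt_zero)
      then obtain x where x: "x \<in> \<Omega>" "Top \<rho> \<eta> f x \<noteq> 0" "dist x p < r/2"
        by blast
      have pT: "p \<in> \<Theta>" using p \<Gamma> unfolding \<Theta>_def by blast
      have all: "\<rho> z * f (x - (1 * \<eta> x) *\<^sub>R z) = 0" if z: "z \<in> ball 0 1" for z
      proof -
        define y where "y = x - (1 * \<eta> x) *\<^sub>R z"
        have yO: "y \<in> \<Omega>" unfolding y_def by (rule stay[OF x(1)]) (use z in auto)
        have "dist y x = \<eta> x * norm z" using \<eta>_nonneg[of x] by (simp add: y_def dist_norm)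
        also have "\<dots> \<le> \<eta> x * 1" using z \<eta>_nonneg[of x] by (intro mult_left_mono) auto
        finally have "dist y x \<le> dist x p" using \<eta>_le[OF pT, of x] by simp
        then have "dist y p < r" using dist_triangle[of y p x] x(3) by linarith
        then have "f y = 0" using r(2)[OF yO] by blast
        then show "\<rho> z * f (x - (1 * \<eta> x) *\<^sub>R z) = 0" by (simp add: y_def)
      qed
      have "integral (ball 0 1) (\<lambda>z. \<rho> z * f (x - (1 * \<eta> x) *\<^sub>R z)) = integral (ball 0 1) (\<lambda>z::'a. 0::real)"
        using all by (intro Henstock_Kurzweil_Integration.integral_cong) blast
      then have "Top \<rho> \<eta> f x = 0" unfolding Top_def Tsc_def by simp
      then show False using x(2) by simp
    qed
    then show ?thesis by blast
  qed
  show ?thesis using part1 part2 by blast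
qed

end
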